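(* Let $(p,q,k)$ and $(p',q',k')$ be two distinct integer triples satisfying $(k+\tfrac12)^2<p^2+q^2$ and $(k'+\tfrac12)^2<p'^2+q'^2$, and suppose $\alpha(p,q,k)=\alpha(p',q',k')$. Then $pq'-qp'=0$, i.e. $(p,q)$ and $(p',q')$ are collinear.
   Context: For integers $p,q,k$ with $(k+\tfrac12)^2<p^2+q^2$, put $\lambda=\sqrt{p^2+q^2-(k+\tfrac12)^2}>0$ and let $\alpha(p,q,k)\in\mathbb R/2\pi\mathbb Z$ be the unique angle with $e^{i\alpha(p,q,k)}(p+qi)=k+\tfrac12+\lambda i$ (it exists since both sides have the same modulus). *)

theory Defs
  imports "HOL-Analysis.Analysis"
begin

definition admissible :: "int \<Rightarrow> int \<Rightarrow> int \<Rightarrow> bool" where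
  "admissible p q k \<longleftrightarrow> (real_of_int k + 1/2)^2 < real_of_int (p^2 + q^2)"

definition lam :: "int \<Rightarrow> int \<Rightarrow> int \<Rightarrow> real" where
  "lam p q k = sqrt (real_of_int (p^2 + q^2) - (real_of_int k + 1/2)^2)"

text \<open>The angle alpha(p,q,k) in R/2piZ, represented by its canonical representative
  in (-pi, pi]: the argument of the unit complex number e^(i alpha) determined by
  e^(i alpha) (p + q i) = k + 1/2 + lambda i.\<close>
definition alpha :: "int \<Rightarrow> int \<Rightarrow> int \<Rightarrow> real" where
  "alpha p q k = Arg (Complex (real_of_int k + 1/2) (lam p q k) / Complex (real_of_int p) (real_of_int q))"

end

theory Submission
  imports Defs
begin

lemma no_sq_aux: "\<forall>D M::int. int n = \<bar>D\<bar> \<longrightarrow> D \<noteq> 0 \<longrightarrow> m * D^2 = M^2 \<longrightarrow> m mod 4 = 3 \<longrightarrow> False"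
proof (induction n rule: less_induct)
  case (less n)
  show ?case
  proof (intro allI impI)
    fix D M :: int
    assume h: "int n = \<bar>D\<bar>" "D \<noteq> 0" "m * D^2 = M^2" "m mod 4 = 3"
    show False
    proof (cases "even D")
      case True
      then obtain D1 where D1: "D = 2*D1" by blast
      have "M^2 = 2*(2*m*D1^2)" using h(3) D1 by (simp add: power2_eq_square)
      then have "even (M^2)" by (metis dvd_triv_left)
      then have "even M" by simp
      then obtain M1 where M1: "M = 2*M1" by blast
      have "m * D1^2 = M1^2" using h(3) D1 M1 by (simp add: power2_eq_square)
      moreover have "nat \<bar>D1\<bar> < n" "int (nat \<bar>D1\<bar>) = \<bar>D1\<bar>" "D1 \<noteq> 0" using h D1 by auto
      ultimately show False using less h(4) by blast
    next
      case False
      then obtain D1 where D1: "D = 2*D1+1" using oddE by blast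
      have "M^2 mod 4 = 0 \<or> M^2 mod 4 = 1"
      proof (cases "even M")
        case True then obtain t where "M = 2*t" by blast
        then show ?thesis by (simp add: power2_eq_square)
      next
        case False then obtain t where "M = 2*t+1" using oddE by blast
        then have "M^2 = 4*(t*t+t) + 1" by (simp add: power2_eq_square algebra_simps)
        then obtain X where "M^2 = 4*X+1" by blast
        then show ?thesis by presburger
      qed
      moreover have "m * D^2 = 4*(m*(D1*D1+D1)) + m" using D1 by (simp add: power2_eq_square algebra_simps)
      then have "(m * D^2) mod 4 = 3" using h(4) by (simp add: mod_add_left_eq[symmetric])
      ultimately show False using h(3) by simp
    qed
  qed
qed

theorem lemma2:
  fixes p q k p' q' k' :: int
  assumes "(p, q, k) \<noteq> (p', q', k')"
    and "admissible p q k" and "admissible p' q' k'"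
    and "alpha p q k = alpha p' q' k'"
  shows "p * q' - q * p' = 0"
proof (rule ccontr)
  assume nD: "p * q' - q * p' \<noteq> 0"
  define a where "a = real_of_int k + 1/2"
  define a' where "a' = real_of_int k' + 1/2"
  define b where "b = lam p q k"
  define b' where "b' = lam p' q' k'"
  have adm: "a^2 < real_of_int p ^2 + real_of_int q^2" "a'^2 < real_of_int p' ^2 + real_of_int q'^2"
    using assms(2,3) unfolding admissible_def a_def a'_def by auto
  have bsq: "b^2 = real_of_int p ^2 + real_of_int q^2 - a^2"
    unfolding b_def lam_def a_def using adm a_def by simp
  have bsq': "b'^2 = real_of_int p' ^2 + real_of_int q'^2 - a'^2"
    unfolding b'_def lam_def a'_def using adm a'_def by simp
  define z where "z = Complex (real_of_int p) (real_of_int q)"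
  define z' where "z' = Complex (real_of_int p') (real_of_int q')"
  define w where "w = Complex a b"
  define w' where "w' = Complex a' b'"
  have nz: "norm z ^2 = real_of_int p ^2 + real_of_int q^2" unfolding z_def cmod_def by simp
  have nz': "norm z' ^2 = real_of_int p' ^2 + real_of_int q'^2" unfolding z'_def cmod_def by simp
  have "norm w ^2 = a^2 + b^2" by (simp add: w_def cmod_def)
  then have nw: "norm w ^2 = norm z ^2" using bsq nz by simp
  have "norm w' ^2 = a'^2 + b'^2" by (simp add: w'_def cmod_def)
  then have nw': "norm w' ^2 = norm z' ^2" using bsq' nz' by simp
  have z0: "z \<noteq> 0" using nz adm(1) by (auto simp: power2_eq_square)
  have z0': "z' \<noteq> 0" using nz' adm(2) by (auto simp: power2_eq_square)
  have n1: "norm (w/z) = 1" using nw z0 by (simp add: norm_divide power2_eq_iff_nonneg)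
  have n1': "norm (w'/z') = 1" using nw' z0' by (simp add: norm_divide power2_eq_iff_nonneg)
  have ar: "Arg (w/z) = Arg (w'/z')" using assms(4) unfolding alpha_def w_def w'_def z_def z'_def a_def a'_def b_def b'_def .
  have "w/z = w'/z'"
    by (metis Arg_eq ar n1 n1' norm_zero zero_neq_one)
  then have eq: "w * z' = w' * z" using z0 z0' by (simp add: divide_eq_eq field_simps)
  have re: "a * p' - b * q' = a' * p - b' * q"
    using arg_cong[OF eq, of Re] unfolding w_def w'_def z_def z'_def by simp
  have im: "a * q' + b * p' = a' * q + b' * p"
    using arg_cong[OF eq, of Im] unfolding w_def w'_def z_def z'_def by simp
  have key: "b * (p * q' - q * p') = p * (a * p' - a' * p) + q * (a * q' - a' * q)"
  proof -
    have "p * (a * p' - a' * p) + q * (a * q' - a' * q) = p * (b * q' - b' * q) + q * (b' * p - b * p')"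
    proof -
      have e1: "a * p' - a' * p = b * q' - b' * q" using re by linarith
      have e2: "a * q' - a' * q = b' * p - b * p'" using im by linarith
      show ?thesis by (simp only: e1 e2)
    qed
    also have "\<dots> = b * (p * q' - q * p')" by (simp add: algebra_simps)
    finally show ?thesis by simp
  qed
  define D where "D = p * q' - q * p'"
  define M where "M = p * ((2*k+1) * p' - (2*k'+1) * p) + q * ((2*k+1) * q' - (2*k'+1) * q)"
  define m where "m = 4 * (p^2 + q^2) - (2*k+1)^2"
  have "2 * b * D = M" using key unfolding D_def M_def a_def a'_def by (simp add: algebra_simps)
  then have "(2*b*D)^2 = real_of_int (M^2)" by simp
  moreover have "(2*b*D)^2 = real_of_int (m * D^2)"
  proof -
    have m4: "4 * b^2 = real_of_int m" unfolding m_def using bsq unfolding a_def by (simp add: algebra_simps power2_eq_square)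
    have "(2*b*D)^2 = (4*b^2) * real_of_int D^2" by (simp add: power_mult_distrib)
    then show ?thesis using m4 by simp
  qed
  ultimately have "m * D^2 = M^2" by linarith
  moreover have "m mod 4 = 3"
  proof -
    have "m = 4 * (p^2 + q^2 - k*k - k - 1) + 3" unfolding m_def by (simp add: power2_eq_square algebra_simps)
    then obtain X where "m = 4*X + 3" by blast
    then show ?thesis by presburger
  qed
  moreover have "D \<noteq> 0" using nD D_def by simp
  ultimately show False using no_sq_aux[of "nat \<bar>D\<bar>" m] by auto
qed

end
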